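(* Let $h_d(x) = 1 - e^{-x}\sum_{i=0}^{d-1} \frac{x^i}{i!}$, let $c^*$ be the unique positive real solution of $2h_2(x)=3h_3(x)$ ($c^*\approx 2.655$), and $\rho = 2h_2(c^* )/c^*\approx 0.5598$. Let $k\ge 4$ be an integer and $c$ a real number with $0<c<40$ and $c\le k$. Let $F$ be the distribution on $\{0,1\}$ with $\mathbb{P}(1)=c/k$. Then $BRev(F^k)/SRev(F^k)\ge \rho$.
   Context: For i.i.d. values $X_1,\dots,X_k\sim F$ of an additive buyer: $SRev(F^k) = k\cdot\sup_{p\ge0} p\,\mathbb{P}(X_1\ge p)$ is the maximal revenue from selling each item separately at posted prices, and $BRev(F^k) = \sup_{p\ge 0} p\,\mathbb{P}(X_1+\dots+X_k\ge p)$ is the maximal revenue from selling all items as one bundle at a posted price. *)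

theory Defs
  imports "HOL-Probability.Probability"
begin

definition h :: "nat \<Rightarrow> real \<Rightarrow> real" where
  "h d x = 1 - exp (- x) * (\<Sum>i<d. x ^ i / fact i)"

definition cstar :: real where
  "cstar = (THE x. x > 0 \<and> 2 * h 2 x = 3 * h 3 x)"

definition rho :: real where
  "rho = 2 * h 2 cstar / cstar"

primrec sum_pmf :: "real pmf \<Rightarrow> nat \<Rightarrow> real pmf" where
  "sum_pmf F 0 = return_pmf 0"
| "sum_pmf F (Suc n) = bind_pmf F (\<lambda>x. map_pmf (\<lambda>s. x + s) (sum_pmf F n))"

definition SRev :: "real pmf \<Rightarrow> nat \<Rightarrow> real" where
  "SRev F k = real k * (SUP p\<in>{0..}. p * measure_pmf.prob F {x. x \<ge> p})"

definition BRev :: "real pmf \<Rightarrow> nat \<Rightarrow> real" where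
  "BRev F k = (SUP p\<in>{0..}. p * measure_pmf.prob (sum_pmf F k) {s. s \<ge> p})"

definition bern01 :: "real \<Rightarrow> real pmf" where
  "bern01 q = map_pmf (\<lambda>b. if b then 1 else 0) (bernoulli_pmf q)"

end

theory Submission
  imports Defs
begin

definition bp :: "nat \<Rightarrow> nat \<Rightarrow> real \<Rightarrow> real" where
  "bp k i p = real (k choose i) * p ^ i * (1 - p) ^ (k - i)"

definition Bc :: "nat \<Rightarrow> nat \<Rightarrow> real \<Rightarrow> real" where
  "Bc k j p = (\<Sum>i<j. bp k i p)"

lemma sum_pmf_bern01:
  assumes "q \<in> {0..1}"
  shows "sum_pmf (bern01 q) k = map_pmf real (binomial_pmf k q)"
proof (induction k)
  case 0
  then show ?case using assms by (simp add: binomial_pmf_0)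
next
  case (Suc n)
  show ?case
    unfolding sum_pmf.simps Suc.IH unfolding bern01_def binomial_pmf_Suc[OF assms]
    by (auto simp add: bind_map_pmf map_bind_pmf map_pmf_comp bind_return_pmf map_pmf_def[symmetric] o_def intro!: bind_pmf_cong map_pmf_cong)
qed

lemma prob_ge:
  assumes "q \<in> {0..1}"
  shows "measure_pmf.prob (sum_pmf (bern01 q) k) {s. s \<ge> real j} = 1 - Bc k j q"
proof -
  let ?B = "binomial_pmf k q"
  have "measure_pmf.prob (sum_pmf (bern01 q) k) {s. s \<ge> real j} = measure_pmf.prob ?B {i. i \<ge> j}"
    by (simp add: sum_pmf_bern01[OF assms])
  also have "{i. i \<ge> j} = UNIV - {..<j}" by auto
  also have "measure_pmf.prob ?B (UNIV - {..<j}) = 1 - measure_pmf.prob ?B {..<j}"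
    using measure_pmf.prob_compl[of "{..<j}" ?B] by simp
  also have "measure_pmf.prob ?B {..<j} = Bc k j q"
    using assms by (simp add: measure_measure_pmf_finite Bc_def bp_def)
  finally show ?thesis .
qed

lemma prob_bern01_ge:
  assumes "q \<in> {0..1}"
  shows "measure_pmf.prob (bern01 q) {x. x \<ge> p} = (if p \<le> 0 then 1 else if p \<le> 1 then q else 0)"
proof -
  have "measure_pmf.prob (bern01 q) {x. x \<ge> p} = measure_pmf.prob (bernoulli_pmf q) {b. (if b then 1 else 0) \<ge> p}"
    by (simp add: bern01_def)
  also have "{b. (if b then 1 else 0) \<ge> p} = (if p \<le> 0 then UNIV else if p \<le> 1 then {True} else {})"
    by auto
  finally show ?thesis using assms by (auto simp: measure_pmf_single)
qed

lemma SRev_bern01: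
  assumes "q \<in> {0..1}"
  shows "SRev (bern01 q) k = real k * q"
proof -
  have "(SUP p\<in>{0..}. p * measure_pmf.prob (bern01 q) {x. x \<ge> p}) = q"
    unfolding prob_bern01_ge[OF assms]
  proof (rule cSup_eq_maximum)
    show "q \<in> (\<lambda>p. p * (if p \<le> 0 then 1 else if p \<le> 1 then q else 0)) ` {0..}"
      by (rule image_eqI[of _ _ 1]) auto
    show "x \<le> q" if "x \<in> (\<lambda>p. p * (if p \<le> 0 then 1 else if p \<le> 1 then q else 0)) ` {0..}" for x
      using that assms by (auto simp: mult_le_cancel_right1 mult_left_le_one_le)
  qed
  then show ?thesis by (simp add: SRev_def)
qed

lemma BRev_ge:
  assumes "q \<in> {0..1}"
  shows "BRev (bern01 q) k \<ge> real j * (1 - Bc k j q)"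
proof -
  let ?f = "\<lambda>p. p * measure_pmf.prob (sum_pmf (bern01 q) k) {s. s \<ge> p}"
  have sup: "set_pmf (sum_pmf (bern01 q) k) \<subseteq> real ` {..k}"
    using assms by (auto simp: sum_pmf_bern01 set_pmf_binomial_eq split: if_splits)
  have bdd: "bdd_above (?f ` {0..})"
  proof (rule bdd_aboveI2)
    fix p :: real assume p: "p \<in> {0..}"
    show "?f p \<le> real k"
    proof (cases "p \<le> real k")
      case True
      have "?f p \<le> p * 1"
        using p by (intro mult_left_mono) auto
      then show ?thesis using True by simp
    next
      case False
      have "set_pmf (sum_pmf (bern01 q) k) \<inter> {s. s \<ge> p} = {}"
        using sup False by fastforce
      then have "measure_pmf.prob (sum_pmf (bern01 q) k) {s. s \<ge> p} = 0"
        by (simp add: measure_pmf_zero_iff)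
      then show ?thesis by simp
    qed
  qed
  have "?f (real j) \<le> BRev (bern01 q) k"
    unfolding BRev_def by (rule cSUP_upper[OF _ bdd]) auto
  then show ?thesis by (simp add: prob_ge[OF assms])
qed

lemma bp_Suc_Suc: "bp (Suc k) (Suc i) p = (1-p) * bp k (Suc i) p + p * bp k i p"
proof (cases "i < k")
  case True
  then obtain d where d: "k = i + Suc d" by (metis add_Suc_right less_imp_Suc_add add.commute)
  show ?thesis unfolding bp_def d by (simp add: algebra_simps)
next
  case False
  then have "k < Suc i" by simp
  then show ?thesis unfolding bp_def by (cases "i = k") (auto simp: binomial_eq_0)
qed

lemma bp_Suc_0: "bp (Suc k) 0 p = (1-p) * bp k 0 p"
  by (simp add: bp_def)

lemma Bc_Suc: "Bc (Suc k) (Suc m) p = Bc k (Suc m) p - p * bp k m p"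
proof (induction m)
  case 0
  then show ?case by (simp add: Bc_def bp_Suc_0 algebra_simps)
next
  case (Suc m)
  have "Bc (Suc k) (Suc (Suc m)) p = Bc (Suc k) (Suc m) p + bp (Suc k) (Suc m) p"
    by (simp add: Bc_def)
  also have "\<dots> = Bc k (Suc (Suc m)) p - p * bp k (Suc m) p"
    using Suc by (simp add: bp_Suc_Suc Bc_def algebra_simps)
  finally show ?case .
qed

lemma DERIV_bp:
  "DERIV (\<lambda>p. bp (Suc n) i p) p :> real (Suc n) * ((if i = 0 then 0 else bp n (i-1) p) - bp n i p)"
proof (cases i)
  case 0
  have f: "(\<lambda>p. bp (Suc n) 0 p) = (\<lambda>p. (1-p) ^ Suc n)" by (simp add: bp_def)
  have g: "bp n 0 p = (1-p)^n" by (simp add: bp_def)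
  have "DERIV (\<lambda>p. (1-p) ^ Suc n) p :> real (Suc n) * (1-p) ^ (Suc n - 1) * (0 - 1)"
    by (intro derivative_eq_intros) auto
  then show ?thesis unfolding 0 f g by simp
next
  case (Suc i')
  consider (lt) "i' < n" | (eq) "i' = n" | (gt) "i' > n" by linarith
  then show ?thesis
  proof cases
    case lt
    then obtain d where d: "n = i' + Suc d" by (metis add_Suc_right less_imp_Suc_add add.commute)
    have e1: "real (Suc n) * real (n choose i') = real (Suc n choose Suc i') * real (Suc i')"
      by (metis Suc_times_binomial_eq of_nat_mult)
    have dd: "Suc n - Suc i' = Suc d" "n - i' = Suc d" "n - Suc i' = d" using d by auto
    have e2n: "Suc d * (Suc n choose Suc i') = Suc n * (n choose Suc i')"
      using binomial_absorb_comp[of "Suc n" "Suc i'"] dd(1) by simp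
    have e2: "real (Suc n) * real (n choose Suc i') = real (Suc n choose Suc i') * real (Suc d)"
      using arg_cong[OF e2n, of real] by (simp only: of_nat_mult mult.commute)
    have D: "DERIV (\<lambda>p. real (Suc n choose Suc i') * p ^ Suc i' * (1 - p) ^ Suc d) p :>
        real (Suc n choose Suc i') * (real (Suc i') * p ^ (Suc i' - 1)) * (1 - p) ^ Suc d
        + real (Suc n choose Suc i') * p ^ Suc i' * (real (Suc d) * (1 - p) ^ (Suc d - 1) * (0 - 1))"
      by (rule derivative_eq_intros refl)+ (simp add: algebra_simps)
    have A: "real (Suc n) * (bp n i' p - bp n (Suc i') p)
       = (real (Suc n) * real (n choose i')) * (p ^ i' * (1 - p) ^ Suc d)
         - (real (Suc n) * real (n choose Suc i')) * (p ^ Suc i' * (1 - p) ^ d)"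
      unfolding bp_def dd by (simp only: mult.assoc right_diff_distrib)
    also have "\<dots> = real (Suc n choose Suc i') * real (Suc i') * (p ^ i' * (1 - p) ^ Suc d)
         - real (Suc n choose Suc i') * real (Suc d) * (p ^ Suc i' * (1 - p) ^ d)"
      unfolding e1 e2 ..
    also have "\<dots> = real (Suc n choose Suc i') * (real (Suc i') * p ^ (Suc i' - 1)) * (1 - p) ^ Suc d
        + real (Suc n choose Suc i') * p ^ Suc i' * (real (Suc d) * (1 - p) ^ (Suc d - 1) * (0 - 1))"
      by (simp add: algebra_simps)
    finally have B: "real (Suc n) * (bp n i' p - bp n (Suc i') p) = 
        real (Suc n choose Suc i') * (real (Suc i') * p ^ (Suc i' - 1)) * (1 - p) ^ Suc d
        + real (Suc n choose Suc i') * p ^ Suc i' * (real (Suc d) * (1 - p) ^ (Suc d - 1) * (0 - 1))" .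
    have F: "(\<lambda>p. bp (Suc n) (Suc i') p) = (\<lambda>p. real (Suc n choose Suc i') * p ^ Suc i' * (1 - p) ^ Suc d)"
      unfolding bp_def dd ..
    show ?thesis unfolding Suc F using D B by simp
  next
    case eq
    have f: "(\<lambda>p. bp (Suc n) (Suc n) p) = (\<lambda>p. p ^ Suc n)" by (simp add: bp_def)
    have "bp n n p = p ^ n" "bp n (Suc n) p = 0" by (simp_all add: bp_def)
    then show ?thesis unfolding Suc eq f
      by (rule_tac DERIV_cong[OF DERIV_pow[of "Suc n" p]]) simp
  next
    case gt
    have z: "(Suc n choose Suc i') = 0" "(n choose i') = 0" "(n choose Suc i') = 0"
      using gt by (auto simp: binomial_eq_0)
    show ?thesis unfolding Suc by (simp add: bp_def z)
  qed
qed

lemma DERIV_Bc: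
  "DERIV (\<lambda>p. Bc (Suc n) (Suc m) p) p :> - real (Suc n) * bp n m p"
proof (induction m)
  case 0
  have f: "(\<lambda>p. Bc (Suc n) (Suc 0) p) = (\<lambda>p. bp (Suc n) 0 p)" by (simp add: Bc_def)
  show ?case unfolding f by (rule DERIV_cong[OF DERIV_bp[of n 0 p]]) (simp add: algebra_simps)
next
  case (Suc m)
  have eq: "(\<lambda>p. Bc (Suc n) (Suc (Suc m)) p) = (\<lambda>p. Bc (Suc n) (Suc m) p + bp (Suc n) (Suc m) p)"
    by (simp add: Bc_def)
  show ?case unfolding eq
    using DERIV_add[OF Suc DERIV_bp[of n "Suc m" p]] by (simp add: algebra_simps)
qed

lemma bp_mono_m:
  assumes "m' < n" "0 \<le> p" "p \<le> 1" "real (Suc m') \<le> real (Suc n) * p"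
  shows "bp n m' p \<le> bp n (Suc m') p"
proof -
  obtain d where d: "n = m' + Suc d" using assms(1) by (metis add_Suc_right less_imp_Suc_add add.commute)
  have dd: "n - m' = Suc d" "n - Suc m' = d" using d by auto
  have idn: "Suc m' * (n choose Suc m') = Suc d * (n choose m')"
    using binomial_absorption[of m' n] binomial_absorb_comp[of n m'] dd(1) by simp
  have id: "real (Suc m') * real (n choose Suc m') = real (Suc d) * real (n choose m')"
    using arg_cong[OF idn, of real] by (simp only: of_nat_mult)
  have "real (Suc m') * (bp n (Suc m') p - bp n m' p)
      = real (n choose m') * p ^ m' * (1 - p) ^ d * (real (Suc d) * p - real (Suc m') * (1 - p))"
  proof -
    have "real (Suc m') * (bp n (Suc m') p - bp n m' p)
        = (real (Suc m') * real (n choose Suc m')) * (p ^ Suc m' * (1 - p) ^ d)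
          - real (Suc m') * real (n choose m') * (p ^ m' * (1 - p) ^ Suc d)"
      unfolding bp_def dd by (simp add: algebra_simps)
    also have "\<dots> = real (Suc d) * real (n choose m') * (p ^ Suc m' * (1 - p) ^ d)
          - real (Suc m') * real (n choose m') * (p ^ m' * (1 - p) ^ Suc d)"
      unfolding id ..
    also have "\<dots> = real (n choose m') * p ^ m' * (1 - p) ^ d * (real (Suc d) * p - real (Suc m') * (1 - p))"
      by (simp add: algebra_simps)
    finally show ?thesis .
  qed
  moreover have "real (Suc d) * p - real (Suc m') * (1 - p) = real (Suc n) * p - real (Suc m')"
    using d by (simp add: algebra_simps)
  moreover have "real (n choose m') * p ^ m' * (1 - p) ^ d \<ge> 0" using assms by simp
  ultimately have "real (Suc m') * (bp n (Suc m') p - bp n m' p) \<ge> 0"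
    using assms(4) by simp
  then show ?thesis by (simp add: zero_le_mult_iff)
qed

lemma Bc_step:
  fixes n m :: nat and c :: real
  assumes c0: "0 \<le> c" and cK: "c \<le> real (Suc n)" and cond: "real m * (real (Suc n) + 1) \<le> c * real (Suc n)"
  shows "Bc (Suc n) (Suc m) (c / real (Suc n)) \<le> Bc (Suc (Suc n)) (Suc m) (c / (real (Suc n) + 1))"
proof -
  define K where "K = real (Suc n)"
  have K0: "K > 0" by (simp add: K_def)
  define bpm where "bpm p = (if m = 0 then 0 else bp n (m-1) p)" for p
  define f where "f q = Bc (Suc n) (Suc m) ((c-q)/K) - q * bp (Suc n) m ((c-q)/K)" for q
  have pascal: "bp (Suc n) m p = (1-p) * bp n m p + p * bpm p" for p
    by (cases m) (simp_all add: bpm_def bp_Suc_0 bp_Suc_Suc)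
  have der: "DERIV f q :> ((c-q)/K - q) * (bp n m ((c-q)/K) - bpm ((c-q)/K))" for q
  proof -
    let ?p = "(c-q)/K"
    have dp: "DERIV (\<lambda>q. (c-q)/K) q :> -1/K"
      by (rule derivative_eq_intros refl)+ (use K0 in \<open>auto simp: field_simps\<close>)
    have d1: "DERIV (\<lambda>q. Bc (Suc n) (Suc m) ((c-q)/K)) q :> (- K * bp n m ?p) * (-1/K)"
      using DERIV_chain2[OF DERIV_Bc[of n m ?p] dp] unfolding K_def by simp
    have d2: "DERIV (\<lambda>q. bp (Suc n) m ((c-q)/K)) q :> (K * (bpm ?p - bp n m ?p)) * (-1/K)"
      using DERIV_chain2[OF DERIV_bp[of n m ?p] dp] unfolding K_def bpm_def by simp
    have d3: "DERIV f q :> (- K * bp n m ?p) * (-1/K) - (1 * bp (Suc n) m ?p + ((K * (bpm ?p - bp n m ?p)) * (-1/K)) * q)"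
      unfolding f_def by (intro DERIV_diff d1 DERIV_mult DERIV_ident d2)
    have "(- K * bp n m ?p) * (-1/K) - (1 * bp (Suc n) m ?p + ((K * (bpm ?p - bp n m ?p)) * (-1/K)) * q)
        = (?p - q) * (bp n m ?p - bpm ?p)"
      using K0 unfolding pascal by (simp add: field_simps)
    then show ?thesis using d3 by simp
  qed
  define q1 where "q1 = c / (K + 1)"
  have KK: "K + K * K > 0" "K + 1 > 0" using K0 by (simp_all add: add_pos_pos)
  have q1: "0 \<le> q1" "(c - q1)/K = q1" using K0 KK c0 by (auto simp: q1_def field_simps)
  have mle: "m \<le> n"
  proof -
    have "real m * (K + 1) \<le> K * K" using cond cK K0 unfolding K_def[symmetric]
      by (smt (verit) mult_right_mono)
    then have "real m * (K+1) < (K+1) * K" using K0 by (simp add: algebra_simps)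
    then have "real m < K" using K0 by (simp add: mult.commute)
    then show ?thesis unfolding K_def by simp
  qed
  have "f 0 \<le> f q1"
  proof (rule DERIV_nonneg_imp_nondecreasing[OF q1(1)])
    fix q assume q: "0 \<le> q" "q \<le> q1"
    let ?p = "(c-q)/K"
    have qK: "q * (K+1) \<le> c" using q unfolding q1_def using KK by (simp add: le_divide_eq)
    have "q * K \<ge> 0" using q K0 by simp
    then have qc: "q \<le> c" using qK by (simp add: distrib_left)
    have p0: "0 \<le> ?p" using qc K0 by simp
    have p1: "?p \<le> 1" using cK q K0 unfolding K_def[symmetric] by (simp add: divide_le_eq_1)
    have pq: "q \<le> ?p" using qK K0 by (simp add: le_divide_eq algebra_simps)
    have "bpm ?p \<le> bp n m ?p"
    proof (cases m)
      case 0 then show ?thesis using p1 by (simp add: bpm_def bp_def)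
    next
      case (Suc m')
      have "real m \<le> K * ?p"
      proof -
        have "K * ?p = c - q" using K0 by simp
        moreover have "real m * (K+1) \<le> c * K" using cond unfolding K_def by simp
        then have "(real m + q) * (K+1) \<le> c * (K+1)" using qK by (simp add: algebra_simps)
        then have "real m + q \<le> c" using KK(2) by simp
        ultimately show ?thesis by simp
      qed
      then show ?thesis unfolding bpm_def Suc using bp_mono_m[of m' n ?p] mle p0 p1 Suc
        unfolding K_def by simp
    qed
    then show "\<exists>y. DERIV f q :> y \<and> 0 \<le> y"
      using der[of q] pq by (intro exI[of _ "((c-q)/K - q) * (bp n m ((c-q)/K) - bpm ((c-q)/K))"]) simp
  qed
  moreover have "f 0 = Bc (Suc n) (Suc m) (c / real (Suc n))" by (simp add: f_def K_def)
  moreover have "f q1 = Bc (Suc (Suc n)) (Suc m) (c / (real (Suc n) + 1))"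
    unfolding f_def q1(2) Bc_Suc by (simp add: q1_def K_def)
  ultimately show ?thesis by simp
qed

lemma prod_div_const: "(\<Prod>l<i. f l / (x::real)) = (\<Prod>l<i. f l) / x ^ i"
  by (induction i) (simp_all add: field_simps)

lemma bp_lim:
  fixes c :: real and i :: nat
  shows "(\<lambda>N. bp N i (c / real N)) \<longlonglongrightarrow> exp (-c) * (c ^ i / fact i)"
proof -
  define g where "g N = (c ^ i / fact i) * (\<Prod>l<i. (real N - real i + 1 + real l) / real N)
        * ((1 + (-c) / real N) ^ N / (1 - c / real N) ^ i)" for N
  have ev: "eventually (\<lambda>N. g N = bp N i (c / real N)) sequentially"
  proof (rule eventually_sequentiallyI[of "Suc (i + nat \<lceil>\<bar>c\<bar>\<rceil>)"])
    fix N assume N: "Suc (i + nat \<lceil>\<bar>c\<bar>\<rceil>) \<le> N"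
    then have Ni: "i \<le> N" and Nc: "\<bar>c\<bar> < real N" and N0: "real N > 0"
      by (auto, linarith)
    have ne: "1 - c / real N \<noteq> 0" using Nc N0 by (auto simp: field_simps)
    have ch: "real (N choose i) = (\<Prod>l<i. real N - real i + 1 + real l) / fact i"
      unfolding binomial_gbinomial gbinomial_pochhammer' pochhammer_prod
      using Ni by (simp add: atLeast0LessThan of_nat_diff algebra_simps)
    have pw: "(1 - c / real N) ^ (N - i) = (1 + (-c) / real N) ^ N / (1 - c / real N) ^ i"
      using Ni ne by (simp add: power_diff)
    show "g N = bp N i (c / real N)"
      unfolding g_def bp_def ch pw prod_div_const
      by (simp add: power_divide field_simps)
  qed
  have l1: "(\<lambda>N. \<Prod>l<i. (real N - real i + 1 + real l) / real N) \<longlonglongrightarrow> (\<Prod>l<i. 1)"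
  proof (rule tendsto_prod)
    fix l assume "l \<in> {..<i}"
    have e: "eventually (\<lambda>N. 1 + (real l + 1 - real i) / real N = (real N - real i + 1 + real l) / real N) sequentially"
      by (rule eventually_sequentiallyI[of 1]) (auto simp: field_simps)
    have "(\<lambda>N. 1 + (real l + 1 - real i) / real N) \<longlonglongrightarrow> 1 + 0"
      by (intro tendsto_intros)
    then show "(\<lambda>N. (real N - real i + 1 + real l) / real N) \<longlonglongrightarrow> 1"
      using tendsto_cong[OF e] by simp
  qed
  have l2: "(\<lambda>N. (1 + (-c) / real N) ^ N) \<longlonglongrightarrow> exp (-c)"
    by (rule tendsto_exp_limit_sequentially)
  have l3: "(\<lambda>N. (1 - c / real N) ^ i) \<longlonglongrightarrow> (1 - 0) ^ i"
    by (intro tendsto_intros)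
  have "g \<longlonglongrightarrow> (c ^ i / fact i) * (\<Prod>l<i. 1) * (exp (-c) / (1 - 0) ^ i)"
    unfolding g_def by (intro tendsto_intros l1 l2 l3) simp
  then have "g \<longlonglongrightarrow> exp (-c) * (c ^ i / fact i)" by (simp add: mult.commute)
  then show ?thesis using tendsto_cong[OF ev] by simp
qed

lemma Bc_lim:
  "(\<lambda>N. Bc N j (c / real N)) \<longlonglongrightarrow> exp (-c) * (\<Sum>i<j. c ^ i / fact i)"
  unfolding Bc_def sum_distrib_left by (intro tendsto_sum bp_lim)

lemma Bc_iter:
  fixes k m :: nat and c :: real
  assumes k: "k \<ge> 1" and c0: "0 \<le> c" and ck: "c \<le> real k" and cond: "real m * (real k + 1) \<le> c * real k"
  shows "Bc k (Suc m) (c / real k) \<le> Bc (k + N) (Suc m) (c / real (k + N))"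
proof (induction N)
  case 0 then show ?case by simp
next
  case (Suc N)
  have mc: "real m \<le> c"
  proof -
    have "real m * (real k + 1) \<le> c * (real k + 1)" using cond c0 by (simp add: algebra_simps)
    then show ?thesis by (simp add: add_pos_pos)
  qed
  obtain n where n: "k + N = Suc n" using k by (cases "k + N") auto
  have c1: "c \<le> real (Suc n)" using ck n by (metis le_add1 of_nat_le_iff order.trans)
  have c2: "real m * (real (Suc n) + 1) \<le> c * real (Suc n)"
  proof -
    have "real m * (real (Suc n) + 1) = real m * (real k + 1) + real m * real N"
      using n by (simp flip: n add: algebra_simps)
    also have "\<dots> \<le> c * real k + c * real N" using cond mc by (intro add_mono mult_right_mono) auto
    also have "\<dots> = c * real (Suc n)" using n by (metis distrib_left of_nat_add)
    finally show ?thesis .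
  qed
  have "Bc (k + N) (Suc m) (c / real (k + N)) \<le> Bc (k + Suc N) (Suc m) (c / real (k + Suc N))"
    using Bc_step[OF c0 c1 c2] n by simp
  then show ?case using Suc by simp
qed

theorem poisson_comparison:
  fixes k m :: nat and c :: real
  assumes k: "k \<ge> 1" and c0: "0 \<le> c" and ck: "c \<le> real k" and cond: "real m * (real k + 1) \<le> c * real k"
  shows "Bc k (Suc m) (c / real k) \<le> exp (-c) * (\<Sum>i<Suc m. c ^ i / fact i)"
proof -
  have "(\<lambda>N. Bc (N + k) (Suc m) (c / real (N + k))) \<longlonglongrightarrow> exp (-c) * (\<Sum>i<Suc m. c ^ i / fact i)"
    using LIMSEQ_ignore_initial_segment[OF Bc_lim, of k] .
  then show ?thesis
    by (rule LIMSEQ_le_const) (use Bc_iter[OF assms] in \<open>auto simp: add.commute\<close>)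
qed

lemma h_Suc: "h (Suc n) x = h n x - exp (-x) * x ^ n / fact n"
  by (simp add: h_def algebra_simps)

lemma DERIV_g: "DERIV (\<lambda>x. exp (-x) * x ^ n / fact n) x :> exp (-x) * (real n * x ^ (n - 1) - x ^ n) / fact n"
proof -
  have e: "DERIV (\<lambda>x. exp (-x)) x :> exp (-x) * (-1)"
    using DERIV_chain2[OF DERIV_exp DERIV_minus[OF DERIV_ident]] by simp
  have "DERIV (\<lambda>x. exp (-x) * x ^ n) x :> exp (-x) * (-1) * x ^ n + real n * x ^ (n - 1) * exp (-x)"
    using DERIV_mult[OF e DERIV_pow[of n x]] by simp
  then have "DERIV (\<lambda>x. exp (-x) * x ^ n / fact n) x :> (exp (-x) * (-1) * x ^ n + real n * x ^ (n - 1) * exp (-x)) / fact n"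
    by (rule DERIV_cdivide)
  then show ?thesis by (simp add: algebra_simps)
qed

lemma DERIV_h: "DERIV (h (Suc n)) x :> exp (-x) * x ^ n / fact n"
proof (induction n arbitrary: x)
  case 0
  have f: "h (Suc 0) = (\<lambda>x. 1 - exp (-x))" by (auto simp: h_def)
  show ?case unfolding f by (auto intro!: derivative_eq_intros)
next
  case (Suc n)
  have f: "h (Suc (Suc n)) = (\<lambda>x. h (Suc n) x - exp (-x) * x ^ Suc n / fact (Suc n))"
    by (rule ext) (simp only: h_Suc)
  have "DERIV (\<lambda>x. h (Suc n) x - exp (-x) * x ^ Suc n / fact (Suc n)) x :>
     exp (-x) * x ^ n / fact n - exp (-x) * (real (Suc n) * x ^ (Suc n - 1) - x ^ Suc n) / fact (Suc n)"
    by (rule DERIV_diff[OF Suc.IH DERIV_g])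
  moreover have "exp (-x) * x ^ n / fact n - exp (-x) * (real (Suc n) * x ^ (Suc n - 1) - x ^ Suc n) / fact (Suc n)
     = exp (-x) * x ^ Suc n / fact (Suc n)"
  proof -
    have "fact n + fact n * real n > (0::real)" by (intro add_pos_nonneg) auto
    then have nz: "fact n + fact n * real n \<noteq> (0::real)" by simp
    show ?thesis using nz by (simp add: field_simps fact_Suc)
  qed
  ultimately show ?case unfolding f by simp
qed

lemma phi_concave: "concave_on {real n..} (\<lambda>x. real (Suc n) * h (Suc n) x - r * x)"
proof (rule f''_le0_imp_concave)
  show "convex {real n..}" by (rule convex_real_interval)
  fix x assume x: "x \<in> {real n..}"
  show "DERIV (\<lambda>x. real (Suc n) * h (Suc n) x - r * x) x :> real (Suc n) * (exp (-x) * x ^ n / fact n) - r"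
    using DERIV_diff[OF DERIV_cmult[OF DERIV_h[of n x], of "real (Suc n)"] DERIV_cmult[OF DERIV_ident, of r]] by simp
  show "DERIV (\<lambda>x. real (Suc n) * (exp (-x) * x ^ n / fact n) - r) x :> real (Suc n) * (exp (-x) * (real n * x ^ (n - 1) - x ^ n) / fact n)"
    using DERIV_diff[OF DERIV_cmult[OF DERIV_g[of n x], of "real (Suc n)"] DERIV_const] by simp
  have "real n * x ^ (n - 1) \<le> x ^ n"
  proof (cases n)
    case 0 then show ?thesis by simp
  next
    case (Suc n')
    have "real n * x ^ n' \<le> x * x ^ n'" using x by (intro mult_right_mono) auto
    then show ?thesis using Suc by simp
  qed
  then show "real (Suc n) * (exp (-x) * (real n * x ^ (n - 1) - x ^ n) / fact n) \<le> 0"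
    by (simp add: mult_nonneg_nonpos divide_nonpos_pos mult_nonpos_nonneg)
qed

lemma phi_nonneg:
  assumes "real n \<le> a" "a \<le> x" "x \<le> b"
    and "real (Suc n) * h (Suc n) a - r * a \<ge> 0" "real (Suc n) * h (Suc n) b - r * b \<ge> 0"
  shows "real (Suc n) * h (Suc n) x - r * x \<ge> 0"
proof (cases "a = b")
  case True then show ?thesis using assms by simp
next
  case False
  then have ab: "a < b" using assms by simp
  define t where "t = (x - a) / (b - a)"
  have t: "0 \<le> t" "t \<le> 1" using assms ab by (auto simp: t_def field_simps)
  have "t * (b - a) = x - a" using ab by (simp add: t_def)
  then have xe: "(1 - t) *\<^sub>R a + t *\<^sub>R b = x" by (simp add: algebra_simps)
  have "(1 - t) * (real (Suc n) * h (Suc n) a - r * a) + t * (real (Suc n) * h (Suc n) b - r * b)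
     \<le> real (Suc n) * h (Suc n) x - r * x"
    using concave_onD[OF phi_concave[of n r] t, of a b] assms xe by auto
  moreover have "(1 - t) * (real (Suc n) * h (Suc n) a - r * a) + t * (real (Suc n) * h (Suc n) b - r * b) \<ge> 0"
    using t assms by simp
  ultimately show ?thesis by linarith
qed

lemma exp_lower_sum:
  fixes x :: real assumes "0 \<le> x"
  shows "(\<Sum>m<n. x ^ m / fact m) \<le> exp x"
proof -
  obtain t where "\<bar>t\<bar> \<le> \<bar>x\<bar>" "exp x = (\<Sum>m<n. x ^ m / fact m) + exp t / fact n * x ^ n"
    using Maclaurin_exp_le[of x n] by blast
  moreover have "exp t / fact n * x ^ n \<ge> 0" using assms by simp
  ultimately show ?thesis by linarith
qed

lemma exp_upper_sum:
  fixes x :: real assumes "0 \<le> x"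
  shows "exp x * (1 - x ^ n / fact n) \<le> (\<Sum>m<n. x ^ m / fact m)"
proof -
  obtain t where t: "\<bar>t\<bar> \<le> \<bar>x\<bar>" "exp x = (\<Sum>m<n. x ^ m / fact m) + exp t / fact n * x ^ n"
    using Maclaurin_exp_le[of x n] by blast
  have "t \<le> x" using t(1) assms by linarith
  then have "exp t / fact n * x ^ n \<le> exp x / fact n * x ^ n"
    using assms by (intro mult_right_mono divide_right_mono) auto
  moreover have "exp x * (1 - x ^ n / fact n) = exp x - exp x / fact n * x ^ n" by (simp add: algebra_simps)
  ultimately show ?thesis using t(2) by linarith
qed

definition psi :: "real \<Rightarrow> real" where "psi x = exp (-x) * (1 + x + 3/2 * x^2)"

lemma root_iff: "2 * h 2 x = 3 * h 3 x \<longleftrightarrow> psi x = 1"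
proof -
  have "h 2 x = 1 - exp (-x) * (1 + x)" "h 3 x = 1 - exp (-x) * (1 + x + x^2/2)"
    by (simp_all add: h_def lessThan_nat_numeral fact_numeral power2_eq_square)
  then show ?thesis unfolding psi_def by (auto simp: algebra_simps)
qed

lemma psi_iff: "psi x = 1 \<longleftrightarrow> exp x = 1 + x + 3/2 * x^2"
  unfolding psi_def by (auto simp: exp_minus field_simps)

lemma DERIV_psi: "DERIV psi x :> exp (-x) * (x * (2 - 3/2 * x))"
proof -
  have e: "DERIV (\<lambda>x. exp (-x)) x :> exp (-x) * (-1)"
    using DERIV_chain2[OF DERIV_exp DERIV_minus[OF DERIV_ident]] by simp
  have q: "DERIV (\<lambda>x. 1 + x + 3/2 * x^2) x :> 1 + 3 * x"
    by (auto intro!: derivative_eq_intros)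
  show ?thesis unfolding psi_def using DERIV_mult[OF e q]
    by (simp add: algebra_simps power2_eq_square)
qed

lemma psi_cont: "continuous_on S psi"
  unfolding psi_def by (intro continuous_intros)

lemma psi_root_gt: assumes "x > 0" "psi x = 1" shows "x > 4/3"
proof (rule ccontr)
  assume "\<not> x > 4/3"
  then have x: "x \<le> 4/3" by simp
  have "psi 0 < psi x"
  proof (rule DERIV_pos_imp_increasing_open[OF assms(1)])
    fix y assume y: "0 < y" "y < x"
    then have "exp (-y) * (y * (2 - 3/2 * y)) > 0" using x by (intro mult_pos_pos) auto
    then show "\<exists>d. DERIV psi y :> d \<and> d > 0" using DERIV_psi by blast
  qed (rule psi_cont)
  then show False using assms by (simp add: psi_def)
qed

lemma psi_root_unique: assumes "x > 0" "psi x = 1" "y > 0" "psi y = 1" shows "x = y"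
proof (rule ccontr)
  assume ne: "x \<noteq> y"
  have gx: "x > 4/3" and gy: "y > 4/3" using psi_root_gt assms by auto
  have *: "psi a > psi b" if "4/3 < a" "a < b" for a b
  proof (rule DERIV_neg_imp_decreasing_open[OF that(2)])
    fix z assume z: "a < z" "z < b"
    then have "z * (2 - 3/2 * z) < 0" using that by (intro mult_pos_neg) auto
    then have "exp (-z) * (z * (2 - 3/2 * z)) < 0" by (rule mult_pos_neg[rotated]) simp
    then show "\<exists>d. DERIV psi z :> d \<and> d < 0" using DERIV_psi by blast
  qed (rule psi_cont)
  show False
  proof (cases "x < y")
    case True then show ?thesis using *[OF gx True] assms by simp
  next
    case False then have "y < x" using ne by simp
    then show ?thesis using *[OF gy \<open>y < x\<close>] assms by simp
  qed
qed

lemma num_lo: "exp (265/100::real) < 1 + 265/100 + 3/2 * (265/100)^2"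
proof -
  have "exp (265/100::real) * (1 - (265/100) ^ 14 / fact 14) \<le> (\<Sum>m<14. (265/100) ^ m / fact m)"
    by (rule exp_upper_sum) simp
  moreover have "(\<Sum>m<14. (265/100::real) ^ m / fact m) < (1 + 265/100 + 3/2 * (265/100)^2) * (1 - (265/100) ^ 14 / fact 14)"
    by (simp add: lessThan_nat_numeral fact_numeral power_divide)
  moreover have "(1 - (265/100::real) ^ 14 / fact 14) > 0"
    by (simp add: fact_numeral power_divide)
  ultimately show ?thesis by (smt (verit) mult_right_mono)
qed

lemma num_hi: "exp (3::real) > 1 + 3 + 3/2 * 3^2"
proof -
  have "(\<Sum>m<8. (3::real) ^ m / fact m) \<le> exp 3"
    by (rule exp_lower_sum) simp
  moreover have "(\<Sum>m<8. (3::real) ^ m / fact m) > 1 + 3 + 3/2 * 3^2"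
    by (simp add: lessThan_nat_numeral fact_numeral)
  ultimately show ?thesis by linarith
qed

lemma cstar_props:
  shows "265/100 < cstar" "cstar < 3" "2 * h 2 cstar = 3 * h 3 cstar"
proof -
  define F where "F x = exp x - (1 + x + 3/2 * x^2)" for x :: real
  have "\<exists>x. 265/100 \<le> x \<and> x \<le> 3 \<and> F x = 0"
    by (rule IVT') (use num_lo num_hi in \<open>auto simp: F_def intro!: continuous_intros\<close>)
  then obtain x where x: "265/100 \<le> x" "x \<le> 3" "F x = 0" by blast
  have ex: "exp x = 1 + x + 3/2 * x^2" using x(3) unfolding F_def by simp
  have "x \<noteq> 265/100"
  proof
    assume xe: "x = 265/100"
    show False using ex num_lo unfolding xe by linarith
  qed
  moreover have "x \<noteq> 3"
  proof
    assume xe: "x = 3"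
    show False using ex num_hi unfolding xe by linarith
  qed
  ultimately have x2: "265/100 < x" "x < 3" using x(1,2) by auto
  have rx: "2 * h 2 x = 3 * h 3 x" using x(3) unfolding root_iff psi_iff F_def by simp
  have "cstar = x" unfolding cstar_def
  proof (rule the_equality)
    show "x > 0 \<and> 2 * h 2 x = 3 * h 3 x" using x2 rx by simp
    fix y assume "y > 0 \<and> 2 * h 2 y = 3 * h 3 y"
    then show "y = x" using psi_root_unique[of y x] x2 rx by (simp add: root_iff)
  qed
  then show "265/100 < cstar" "cstar < 3" "2 * h 2 cstar = 3 * h 3 cstar" using x2 rx by auto
qed

lemma rho_props:
  shows "2 * h 2 cstar - rho * cstar = 0" "3 * h 3 cstar - rho * cstar = 0" "rho \<le> 561/1000"
proof -
  have c: "265/100 < cstar" "cstar < 3" "2 * h 2 cstar = 3 * h 3 cstar" using cstar_props by auto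
  show "2 * h 2 cstar - rho * cstar = 0" using c by (simp add: rho_def)
  then show "3 * h 3 cstar - rho * cstar = 0" using c by simp
  define s where "s = cstar"
  have e: "exp s = 1 + s + 3/2 * s^2" using c(3) unfolding root_iff psi_iff s_def .
  have Q: "1 + s + 3/2 * s^2 > 0" using c unfolding s_def by (simp add: add_pos_nonneg)
  have h2: "h 2 s = 1 - (1 + s) / (1 + s + 3/2 * s^2)"
    unfolding h_def by (simp add: lessThan_nat_numeral exp_minus e field_simps)
  have D: "s * 2 + (s * (s * 2) + s * (s * (s * 3))) > 0" using c unfolding s_def[symmetric]
    by (simp add: add_pos_pos)
  have r: "rho = 3 * s / (1 + s + 3/2 * s^2)"
    unfolding rho_def s_def[symmetric] h2 using Q D c unfolding s_def[symmetric]
    by (simp add: field_simps power2_eq_square)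
  have "(s - 265/100) * (s - 265/100) \<ge> 0" by simp
  then have "3 * s \<le> 561/1000 * (1 + s + 3/2 * s^2)" using c unfolding s_def[symmetric]
    by (simp add: power2_eq_square algebra_simps)
  then show "rho \<le> 561/1000" unfolding r using Q by (simp add: divide_le_eq)
qed

lemma num_check:
  fixes a R :: real and j n :: nat
  assumes a: "0 \<le> a" and j: "j > 0" and t: "0 \<le> 1 - R * a / real j"
    and ineq: "(\<Sum>i<j. a ^ i / fact i) \<le> (1 - R * a / real j) * (\<Sum>i<n. a ^ i / fact i)"
  shows "real j * h j a - R * a \<ge> 0"
proof -
  have S: "(\<Sum>i<n. a ^ i / fact i) \<le> exp a" by (rule exp_lower_sum[OF a])
  have "exp (-a) * (\<Sum>i<j. a ^ i / fact i) \<le> exp (-a) * ((1 - R * a / real j) * exp a)"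
    using ineq S t by (smt (verit) exp_gt_zero mult_left_mono)
  also have "\<dots> = 1 - R * a / real j" by (simp add: exp_minus field_simps)
  finally have "h j a \<ge> R * a / real j" unfolding h_def by simp
  then show ?thesis using j by (simp add: field_simps)
qed

lemma chk0: "real 1 * h 1 (126/100) - 561/1000 * (126/100::real) \<ge> 0"
  by (rule num_check[where n=6]) (simp_all add: lessThan_nat_numeral fact_numeral power_divide)

lemma chk1: "real 2 * h 2 (126/100) - 561/1000 * (126/100::real) \<ge> 0"
  by (rule num_check[where n=7]) (simp_all add: lessThan_nat_numeral fact_numeral power_divide)

lemma chk2: "real 3 * h 3 (41/10) - 561/1000 * (41/10::real) \<ge> 0"
  by (rule num_check[where n=10]) (simp_all add: lessThan_nat_numeral fact_numeral power_divide)

lemma chk3: "real 4 * h 4 (41/10) - 561/1000 * (41/10::real) \<ge> 0"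
  by (rule num_check[where n=10]) (simp_all add: lessThan_nat_numeral fact_numeral power_divide)

lemma chk4: "real 4 * h 4 (59/10) - 561/1000 * (59/10::real) \<ge> 0"
  by (rule num_check[where n=12]) (simp_all add: lessThan_nat_numeral fact_numeral power_divide)

lemma chk5: "real 5 * h 5 (59/10) - 561/1000 * (59/10::real) \<ge> 0"
  by (rule num_check[where n=11]) (simp_all add: lessThan_nat_numeral fact_numeral power_divide)

lemma chk6: "real 5 * h 5 (39/5) - 561/1000 * (39/5::real) \<ge> 0"
  by (rule num_check[where n=13]) (simp_all add: lessThan_nat_numeral fact_numeral power_divide)

lemma chk7: "real 7 * h 7 (39/5) - 561/1000 * (39/5::real) \<ge> 0"
  by (rule num_check[where n=14]) (simp_all add: lessThan_nat_numeral fact_numeral power_divide)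

lemma chk8: "real 7 * h 7 (58/5) - 561/1000 * (58/5::real) \<ge> 0"
  by (rule num_check[where n=17]) (simp_all add: lessThan_nat_numeral fact_numeral power_divide)

lemma chk9: "real 11 * h 11 (58/5) - 561/1000 * (58/5::real) \<ge> 0"
  by (rule num_check[where n=20]) (simp_all add: lessThan_nat_numeral fact_numeral power_divide)

lemma chk10: "real 11 * h 11 (19) - 561/1000 * (19::real) \<ge> 0"
  by (rule num_check[where n=22]) (simp_all add: lessThan_nat_numeral fact_numeral power_divide)

lemma chk11: "real 18 * h 18 (19) - 561/1000 * (19::real) \<ge> 0"
  by (rule num_check[where n=28]) (simp_all add: lessThan_nat_numeral fact_numeral power_divide)

lemma chk12: "real 18 * h 18 (158/5) - 561/1000 * (158/5::real) \<ge> 0"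
  by (rule num_check[where n=29]) (simp_all add: lessThan_nat_numeral fact_numeral power_divide)

lemma chk13: "real 23 * h 23 (158/5) - 561/1000 * (158/5::real) \<ge> 0"
  by (rule num_check[where n=29]) (simp_all add: lessThan_nat_numeral fact_numeral power_divide)

lemma chk14: "real 23 * h 23 (40) - 561/1000 * (40::real) \<ge> 0"
  by (rule num_check[where n=32]) (simp_all add: lessThan_nat_numeral fact_numeral power_divide)

lemma to_rho: fixes x a :: real assumes "x - 561/1000 * a \<ge> 0" "0 \<le> a" shows "x - rho * a \<ge> 0"
proof -
  have "rho * a \<le> 561/1000 * a" using rho_props(3) assms(2) by (rule mult_right_mono)
  then show ?thesis using assms(1) by linarith
qed

lemma cond_ok:
  fixes a c d :: real and m k :: nat
  assumes "real m \<le> (a - real m) * d" "0 \<le> d" "d \<le> real k" "a \<le> c" "real m \<le> a"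
  shows "real m * (real k + 1) \<le> c * real k"
proof -
  have "(a - real m) * d \<le> (c - real m) * real k"
    using assms by (intro mult_mono) auto
  then show ?thesis using assms(1) by (simp add: algebra_simps)
qed

lemma interval_case:
  fixes k m :: nat and a b c d :: real
  assumes k: "k \<ge> 4" and ck: "c \<le> real k" and c0: "0 \<le> c"
    and ac: "a \<le> c" and cb: "c \<le> b" and ma: "real m \<le> a"
    and md: "real m \<le> (a - real m) * d" "0 \<le> d" "d \<le> real k"
    and pa: "real (Suc m) * h (Suc m) a - rho * a \<ge> 0"
    and pb: "real (Suc m) * h (Suc m) b - rho * b \<ge> 0"
  shows "rho * c \<le> BRev (bern01 (c / real k)) k"
proof -
  have q: "c / real k \<in> {0..1}" using k ck c0 by auto
  have "Bc k (Suc m) (c / real k) \<le> exp (-c) * (\<Sum>i<Suc m. c ^ i / fact i)"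
    by (rule poisson_comparison) (use k ck c0 cond_ok[OF md ac ma] in auto)
  then have "h (Suc m) c \<le> 1 - Bc k (Suc m) (c / real k)" by (simp add: h_def)
  then have "real (Suc m) * h (Suc m) c \<le> real (Suc m) * (1 - Bc k (Suc m) (c / real k))"
    by (intro mult_left_mono) auto
  also have "\<dots> \<le> BRev (bern01 (c / real k)) k" by (rule BRev_ge[OF q])
  finally have B: "real (Suc m) * h (Suc m) c \<le> BRev (bern01 (c / real k)) k" .
  have "real (Suc m) * h (Suc m) c - rho * c \<ge> 0" by (rule phi_nonneg[OF ma ac cb pa pb])
  then show ?thesis using B by linarith
qed

theorem lemma5:
  fixes k :: nat and c :: real
  assumes "k \<ge> 4" and "0 < c" and "c < 40" and "c \<le> real k"
  shows "BRev (bern01 (c / real k)) k / SRev (bern01 (c / real k)) k \<ge> rho"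
proof -
  have q: "c / real k \<in> {0..1}" using assms by auto
  have S: "SRev (bern01 (c / real k)) k = c" using assms by (simp add: SRev_bern01[OF q])
  have c0: "0 \<le> c" using assms by simp
  have k4: "real k \<ge> 4" using assms(1) by simp
  have cs: "265/100 < cstar" "cstar < 3" using cstar_props by auto
  note ic = interval_case[OF assms(1) assms(4) c0]
  have main: "rho * c \<le> BRev (bern01 (c / real k)) k"
  proof -
    consider "c \<le> 126/100" | "126/100 \<le> c \<and> c \<le> cstar" | "cstar \<le> c \<and> c \<le> 41/10"
      | "41/10 \<le> c \<and> c \<le> 59/10" | "59/10 \<le> c \<and> c \<le> 39/5" | "39/5 \<le> c \<and> c \<le> 58/5"
      | "58/5 \<le> c \<and> c \<le> 19" | "19 \<le> c \<and> c \<le> 158/5" | "158/5 \<le> c \<and> c \<le> 40"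
      using assms by linarith
    then show ?thesis
    proof cases
      case 1
      show ?thesis
        by (rule ic[where a="0" and b="126/100" and m=0 and d="4"]) (use 1 c0 k4 to_rho[OF chk0] in \<open>simp_all add: h_def\<close>)
    next
      case 2
      show ?thesis
        by (rule ic[where a="126/100" and b="cstar" and m=1 and d="4"]) (use 2 k4 to_rho[OF chk1] rho_props(1) in \<open>simp_all add: numeral_2_eq_2[symmetric]\<close>)
    next
      case 3
      show ?thesis
        by (rule ic[where a="cstar" and b="41/10" and m=2 and d="4"]) (use 3 k4 cs to_rho[OF chk2] rho_props(2) in \<open>simp_all add: numeral_2_eq_2[symmetric]\<close>)
    next
      case 4
      show ?thesis
        by (rule ic[where a="41/10" and b="59/10" and m=3 and d="4"]) (use 4 k4 to_rho[OF chk3] to_rho[OF chk4] in \<open>simp_all add: numeral_2_eq_2[symmetric]\<close>)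
    next
      case 5
      show ?thesis
        by (rule ic[where a="59/10" and b="39/5" and m=4 and d="4"]) (use 5 k4 to_rho[OF chk5] to_rho[OF chk6] in \<open>simp_all add: numeral_2_eq_2[symmetric]\<close>)
    next
      case 6
      show ?thesis
        by (rule ic[where a="39/5" and b="58/5" and m=6 and d="4"]) (use 6 k4 to_rho[OF chk7] to_rho[OF chk8] in \<open>simp_all add: numeral_2_eq_2[symmetric]\<close>)
    next
      case 7
      show ?thesis
        by (rule ic[where a="58/5" and b="19" and m=10 and d="58/5"]) (use 7 assms(4) to_rho[OF chk9] to_rho[OF chk10] in \<open>simp_all add: numeral_2_eq_2[symmetric]\<close>)
    next
      case 8
      show ?thesis
        by (rule ic[where a="19" and b="158/5" and m=17 and d="19"]) (use 8 assms(4) to_rho[OF chk11] to_rho[OF chk12] in \<open>simp_all add: numeral_2_eq_2[symmetric]\<close>)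
    next
      case 9
      show ?thesis
        by (rule ic[where a="158/5" and b="40" and m=22 and d="158/5"]) (use 9 assms(4) to_rho[OF chk13] to_rho[OF chk14] in \<open>simp_all add: numeral_2_eq_2[symmetric]\<close>)
    qed
  qed
  show ?thesis using main S assms(2) by (simp add: le_divide_eq mult.commute)
qed

end
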